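(* Let $0<\phi<\pi/6$ and let $H\in\mathcal H$, i.e. $H(p,t)$ is analytic in $p\in\mathcal S_\phi$ and $|H(p,t)|<C|p|^{\alpha-1}e^{\rho|p|}$ for some positive constants $C,\alpha,\rho$. Let $F\in\mathcal A_\phi$. Then for $\nu>\rho+1$, $H*F\in\mathcal A_\phi$ and $$\|H*F\|_\nu\le\||H|*|F|\|_\nu\le K\,C\,\Gamma(\alpha)(\nu-\rho)^{-\alpha}\|F\|_\nu,$$ where $K>0$ is a constant not depending on $\nu$ or $F$.
   Context: $\mathcal S_\phi=\{p:\arg p\in(-\phi,\phi),0<|p|<\infty\}$, $T>0$, $\mathcal K=\overline{\mathcal S_\phi}\times[0,T]$. For $\nu>0$, $\|G\|_\nu=M_0\sup_{(p,t)\in\mathcal K}(1+|p|^2)e^{-\nu|p|}|G(p,t)|$ (also used for continuous functions on $\mathcal K$), with $M_0=\sup_{s\ge0}\frac{2(1+s^2)(\ln(1+s^2)+s\arctan s)}{s(s^2+4)}$. $\mathcal A_\phi$ is the Banach space of functions $F(p,t)$ analytic in $p$ on $\mathcal S_\phi$ and continuous on $\overline{\mathcal S_\phi}$ for each $t\in[0,T]$, with $\|F\|_\nu<\infty$. Convolution: $(H*F)(p,t)=\int_0^pH(s,t)F(p-s,t)\,ds$ along the segment $[0,p]$; for $p=|p|e^{i\theta}$, $(|H|*|F|)(p,t)=\int_0^{|p|}|H(se^{i\theta},t)||F(p-se^{i\theta},t)|\,ds$. *)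

theory Defs
  imports "HOL-Complex_Analysis.Complex_Analysis"
begin

definition sector :: "real \<Rightarrow> complex set" where
  "sector \<phi> = {p. p \<noteq> 0 \<and> \<bar>Arg p\<bar> < \<phi>}"

definition Kset :: "real \<Rightarrow> real \<Rightarrow> (complex \<times> real) set" where
  "Kset \<phi> T = closure (sector \<phi>) \<times> {0..T}"

definition M0 :: real where
  "M0 = (SUP s\<in>{0::real..}. 2 * (1 + s\<^sup>2) * (ln (1 + s\<^sup>2) + s * arctan s) / (s * (s\<^sup>2 + 4)))"

definition weighted :: "real \<Rightarrow> (complex \<Rightarrow> real \<Rightarrow> 'a::real_normed_vector) \<Rightarrow> complex \<times> real \<Rightarrow> real" where
  "weighted \<nu> G = (\<lambda>(p,t). (1 + (cmod p)\<^sup>2) * exp (- \<nu> * cmod p) * norm (G p t))"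

definition nu_bounded :: "real \<Rightarrow> real \<Rightarrow> real \<Rightarrow> (complex \<Rightarrow> real \<Rightarrow> 'a::real_normed_vector) \<Rightarrow> bool" where
  "nu_bounded \<phi> T \<nu> G = bdd_above (weighted \<nu> G ` Kset \<phi> T)"

definition nu_norm :: "real \<Rightarrow> real \<Rightarrow> real \<Rightarrow> (complex \<Rightarrow> real \<Rightarrow> 'a::real_normed_vector) \<Rightarrow> real" where
  "nu_norm \<phi> T \<nu> G = M0 * (SUP x\<in>Kset \<phi> T. weighted \<nu> G x)"

definition A_phi :: "real \<Rightarrow> real \<Rightarrow> real \<Rightarrow> (complex \<Rightarrow> real \<Rightarrow> complex) \<Rightarrow> bool" where
  "A_phi \<phi> T \<nu> F \<longleftrightarrow>
     (\<forall>t\<in>{0..T}. (\<lambda>p. F p t) holomorphic_on sector \<phi> \<and>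
                 continuous_on (closure (sector \<phi>)) (\<lambda>p. F p t)) \<and>
     nu_bounded \<phi> T \<nu> F"

definition in_H :: "real \<Rightarrow> real \<Rightarrow> (complex \<Rightarrow> real \<Rightarrow> complex) \<Rightarrow> real \<Rightarrow> real \<Rightarrow> real \<Rightarrow> bool" where
  "in_H \<phi> T H C \<alpha> \<rho> \<longleftrightarrow>
     (\<forall>t\<in>{0..T}. (\<lambda>p. H p t) holomorphic_on sector \<phi> \<and>
                 continuous_on (closure (sector \<phi>) - {0}) (\<lambda>p. H p t) \<and>
                 (\<forall>p\<in>sector \<phi>. cmod (H p t) < C * cmod p powr (\<alpha> - 1) * exp (\<rho> * cmod p)))"

definition conv :: "(complex \<Rightarrow> real \<Rightarrow> complex) \<Rightarrow> (complex \<Rightarrow> real \<Rightarrow> complex) \<Rightarrow> complex \<Rightarrow> real \<Rightarrow> complex" where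
  "conv H F p t = contour_integral (linepath 0 p) (\<lambda>s. H s t * F (p - s) t)"

definition absconv :: "(complex \<Rightarrow> real \<Rightarrow> complex) \<Rightarrow> (complex \<Rightarrow> real \<Rightarrow> complex) \<Rightarrow> complex \<Rightarrow> real \<Rightarrow> real" where
  "absconv H F p t = integral {0..cmod p}
      (\<lambda>s. cmod (H (of_real s * sgn p) t) * cmod (F (p - of_real s * sgn p) t))"

end

theory Submission
  imports Defs
begin

lemma sector_open: assumes "\<phi> \<le> pi" shows "open (sector \<phi>)"
proof -
  have eq: "sector \<phi> = (- \<real>\<^sub>\<le>\<^sub>0) \<inter> Arg -` {-\<phi><..<\<phi>}"
  proof (intro set_eqI iffI)
    fix p assume p: "p \<in> sector \<phi>"
    hence p0: "p \<noteq> 0" and a: "\<bar>Arg p\<bar> < \<phi>" by (auto simp: sector_def)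
    have "p \<notin> \<real>\<^sub>\<le>\<^sub>0"
    proof
      assume "p \<in> \<real>\<^sub>\<le>\<^sub>0"
      then obtain r where "p = of_real r" "r \<le> 0" by (auto elim: nonpos_Reals_cases)
      with p0 have "r < 0" "p = of_real r" by auto
      hence "Arg p = pi" by simp
      with a assms show False by auto
    qed
    with a show "p \<in> (- \<real>\<^sub>\<le>\<^sub>0) \<inter> Arg -` {-\<phi><..<\<phi>}" by auto
  next
    fix p assume "p \<in> (- \<real>\<^sub>\<le>\<^sub>0) \<inter> Arg -` {-\<phi><..<\<phi>}"
    then show "p \<in> sector \<phi>" by (auto simp: sector_def)
  qed
  have "continuous_on (- \<real>\<^sub>\<le>\<^sub>0) Arg"
    by (intro continuous_at_imp_continuous_on ballI continuous_at_Arg) auto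
  moreover have "open (- \<real>\<^sub>\<le>\<^sub>0 :: complex set)"
    using closed_nonpos_Reals_complex by (simp add: open_Compl)
  ultimately show ?thesis unfolding eq
    by (intro continuous_open_preimage) auto
qed

lemma sector_cone: "q \<in> sector \<phi> \<Longrightarrow> 0 < c \<Longrightarrow> of_real c * q \<in> sector \<phi>"
  by (auto simp: sector_def)

lemma one_in_sector: "0 < \<phi> \<Longrightarrow> 1 \<in> sector \<phi>"
  by (auto simp: sector_def)

lemma zero_notin_sector: "0 \<notin> sector \<phi>"
  by (auto simp: sector_def)

lemma zero_in_closure_sector: assumes "0 < \<phi>" shows "0 \<in> closure (sector \<phi>)"
proof -
  have "(\<lambda>n. of_real (inverse (real (Suc n))) :: complex) \<longlonglongrightarrow> of_real 0"
    by (intro tendsto_of_real LIMSEQ_inverse_real_of_nat)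
  moreover have "\<forall>n. (of_real (inverse (real (Suc n))) :: complex) \<in> sector \<phi>"
    using sector_cone[OF one_in_sector[OF assms]] by (metis mult.right_neutral of_nat_0_less_iff positive_imp_inverse_positive zero_less_Suc)
  ultimately show ?thesis unfolding closure_sequential by auto
qed

lemma closure_sector_cone: assumes "0 < \<phi>" "q \<in> closure (sector \<phi>)" "0 \<le> c"
  shows "of_real c * q \<in> closure (sector \<phi>)"
proof (cases "c = 0")
  case True thus ?thesis using zero_in_closure_sector[OF assms(1)] by simp
next
  case False
  hence c: "c > 0" using assms by auto
  have "of_real c * q = c *\<^sub>R q" by (simp add: scaleR_conv_of_real)
  also have "\<dots> \<in> (*\<^sub>R) c ` closure (sector \<phi>)" using assms by auto
  also have "\<dots> = closure ((*\<^sub>R) c ` sector \<phi>)" by (rule closure_scaleR)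
  also have "\<dots> \<subseteq> closure (sector \<phi>)"
    by (intro closure_mono) (auto simp: scaleR_conv_of_real intro: sector_cone c)
  finally show ?thesis .
qed

lemma bound_closure:
  fixes h :: "complex \<Rightarrow> complex"
  assumes cont: "continuous_on (closure S - {0}) h"
    and bnd: "\<And>q. q \<in> S \<Longrightarrow> cmod (h q) < C * cmod q powr (\<alpha> - 1) * exp (\<rho> * cmod q)"
    and q: "q \<in> closure S" "q \<noteq> 0" and S0: "0 \<notin> S"
  shows "cmod (h q) \<le> C * cmod q powr (\<alpha> - 1) * exp (\<rho> * cmod q)"
proof -
  obtain x where x: "\<forall>n. x n \<in> S" "x \<longlonglongrightarrow> q" using q unfolding closure_sequential by auto
  have xin: "\<forall>n. x n \<in> closure S - {0}"
  proof
    fix n have "x n \<in> S" using x(1) by simp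
    thus "x n \<in> closure S - {0}" using S0 closure_subset by fastforce
  qed
  have qin: "q \<in> closure S - {0}" using q by simp
  have "(h \<circ> x) \<longlonglongrightarrow> h q"
    using cont[unfolded continuous_on_sequentially, rule_format, OF qin] xin x(2) by simp
  hence l1: "(\<lambda>n. cmod (h (x n))) \<longlonglongrightarrow> cmod (h q)" by (intro tendsto_norm) (simp add: o_def)
  have l2: "(\<lambda>n. C * cmod (x n) powr (\<alpha> - 1) * exp (\<rho> * cmod (x n))) \<longlonglongrightarrow> C * cmod q powr (\<alpha> - 1) * exp (\<rho> * cmod q)"
    using q x by (intro tendsto_intros) auto
  show ?thesis
  proof (rule tendsto_le[OF _ l2 l1])
    show "\<forall>\<^sub>F n in sequentially. cmod (h (x n)) \<le> C * cmod (x n) powr (\<alpha> - 1) * exp (\<rho> * cmod (x n))"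
      using bnd x(1) by (intro always_eventually allI less_imp_le) blast
  qed simp
qed


lemma powr_exp_bound:
  fixes \<beta> y :: real assumes "1 \<le> \<beta>" "0 \<le> y"
  shows "(1 + y) powr \<beta> \<le> \<beta> powr \<beta> * exp y"
proof -
  have "(1 + y) / \<beta> \<le> 1 + y / \<beta>" using assms by (simp add: field_simps)
  also have "\<dots> \<le> exp (y / \<beta>)" by (rule exp_ge_add_one_self)
  finally have a: "(1 + y) / \<beta> \<le> exp (y / \<beta>)" .
  have "((1 + y) / \<beta>) powr \<beta> \<le> exp (y / \<beta>) powr \<beta>"
    using assms a by (intro powr_mono2) auto
  also have "exp (y / \<beta>) powr \<beta> = exp y" using assms by (simp add: powr_def)
  finally have "(1 + y) powr \<beta> / \<beta> powr \<beta> \<le> exp y"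
    using assms by (simp add: powr_divide)
  thus ?thesis using assms by (simp add: field_simps)
qed

lemma exp_neg_bound:
  fixes \<alpha> x :: real assumes "0 < \<alpha>" "0 \<le> x"
  shows "exp (- x) \<le> (\<alpha>+1) powr (\<alpha>+1) * (1 + x) powr (- (\<alpha>+1))"
proof -
  have "(1 + x) powr (\<alpha>+1) \<le> (\<alpha>+1) powr (\<alpha>+1) * exp x"
    using assms by (intro powr_exp_bound) auto
  hence "exp (-x) * (1 + x) powr (\<alpha>+1) \<le> (\<alpha>+1) powr (\<alpha>+1)"
    by (simp add: exp_minus field_simps)
  moreover have P: "0 < (1+x) powr (\<alpha>+1)" using assms by simp
  ultimately have "exp (-x) \<le> (\<alpha>+1) powr (\<alpha>+1) / (1+x) powr (\<alpha>+1)"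
    by (simp add: le_divide_eq)
  moreover have eq: "(1+x) powr (-(\<alpha>+1)) = inverse ((1+x) powr (\<alpha>+1))" by (rule powr_minus)
  ultimately show ?thesis by (simp only: eq divide_inverse)
qed

lemma tail_bound:
  fixes \<alpha> x :: real assumes "0 < \<alpha>" "0 \<le> x"
  shows "(1 + x\<^sup>2) * x powr \<alpha> * exp (- x / 2) \<le> 2 powr (\<alpha>+2) * (\<alpha>+2) powr (\<alpha>+2)"
proof -
  have "1 + x\<^sup>2 \<le> (1 + x) powr 2" using assms by (simp add: power2_eq_square algebra_simps)
  moreover have "x powr \<alpha> \<le> (1 + x) powr \<alpha>" using assms by (intro powr_mono2) auto
  ultimately have "(1 + x\<^sup>2) * x powr \<alpha> \<le> (1 + x) powr 2 * (1 + x) powr \<alpha>"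
    using assms by (intro mult_mono) auto
  also have "\<dots> = (1 + x) powr (\<alpha> + 2)" using assms by (simp add: powr_add)
  also have "\<dots> \<le> (2 * (1 + x/2)) powr (\<alpha> + 2)" using assms by (intro powr_mono2) auto
  also have "\<dots> = 2 powr (\<alpha>+2) * (1 + x/2) powr (\<alpha>+2)" by (rule powr_mult)
  also have "\<dots> \<le> 2 powr (\<alpha>+2) * ((\<alpha>+2) powr (\<alpha>+2) * exp (x/2))"
    using assms by (intro mult_left_mono powr_exp_bound) auto
  finally have "(1 + x\<^sup>2) * x powr \<alpha> \<le> 2 powr (\<alpha>+2) * (\<alpha>+2) powr (\<alpha>+2) * exp (x/2)" by simp
  hence "(1 + x\<^sup>2) * x powr \<alpha> * exp (- x / 2) \<le> 2 powr (\<alpha>+2) * (\<alpha>+2) powr (\<alpha>+2) * exp (x/2) * exp (- x / 2)"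
    by (intro mult_right_mono) auto
  also have "\<dots> = 2 powr (\<alpha>+2) * (\<alpha>+2) powr (\<alpha>+2)" by (simp add: exp_minus field_simps)
  finally show ?thesis .
qed

definition cA :: "real \<Rightarrow> real" where "cA \<alpha> = (\<alpha>+1) powr (\<alpha>+1)"
definition cE :: "real \<Rightarrow> real" where "cE \<alpha> = 2 powr (\<alpha>+2) * (\<alpha>+2) powr (\<alpha>+2)"

lemma pointwise_bound:
  fixes \<alpha> \<mu> r u :: real
  assumes a: "0 < \<alpha>" and m: "1 \<le> \<mu>" and r: "0 < r" and u: "0 < u" "u \<le> 1"
  shows "(1 + r\<^sup>2) * r powr \<alpha> * u powr (\<alpha>-1) * exp (- (\<mu> * r * u)) / (1 + ((1-u)*r)\<^sup>2)
     \<le> 4 * cA \<alpha> * r powr \<alpha> * u powr (\<alpha>-1) * (1 + \<mu>*r*u) powr (-(\<alpha>+1)) + cE \<alpha> * \<mu> powr (-\<alpha>) * u powr (\<alpha>-1)"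
proof -
  have cApos: "0 \<le> cA \<alpha>" "0 \<le> cE \<alpha>" by (auto simp: cA_def cE_def)
  have up: "0 \<le> u powr (\<alpha>-1)" by simp
  have den: "0 < 1 + ((1-u)*r)\<^sup>2" by (simp add: add_pos_nonneg)
  show ?thesis
  proof (cases "u \<le> 1/2")
    case True
    have q: "(1 + r\<^sup>2) / (1 + ((1-u)*r)\<^sup>2) \<le> 4"
    proof -
      have h: "1/2 \<le> 1-u" using True by simp
      have "(1/2::real)^2 \<le> (1-u)^2" by (rule power_mono[OF h]) simp
      hence h2: "1/4 \<le> (1-u)^2" by (simp add: power2_eq_square)
      have "1/4 * r\<^sup>2 \<le> (1-u)^2 * r\<^sup>2" by (rule mult_right_mono[OF h2]) simp
      moreover have "((1-u)*r)\<^sup>2 = (1-u)^2 * r\<^sup>2" by (simp add: power_mult_distrib)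
      ultimately have "r\<^sup>2 / 4 \<le> ((1-u)*r)\<^sup>2" by simp
      hence "1 + r\<^sup>2 \<le> 4 * (1 + ((1-u)*r)\<^sup>2)" by simp
      thus ?thesis using den by (simp add: divide_le_eq)
    qed
    have e: "exp (- (\<mu> * r * u)) \<le> cA \<alpha> * (1 + \<mu>*r*u) powr (-(\<alpha>+1))"
      unfolding cA_def using a m r u by (intro exp_neg_bound) auto
    have "(1 + r\<^sup>2) * r powr \<alpha> * u powr (\<alpha>-1) * exp (- (\<mu> * r * u)) / (1 + ((1-u)*r)\<^sup>2)
        = ((1 + r\<^sup>2) / (1 + ((1-u)*r)\<^sup>2)) * (r powr \<alpha> * u powr (\<alpha>-1)) * exp (- (\<mu> * r * u))" by simp
    also have "\<dots> \<le> 4 * (r powr \<alpha> * u powr (\<alpha>-1)) * (cA \<alpha> * (1 + \<mu>*r*u) powr (-(\<alpha>+1)))"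
      using q e by (intro mult_mono) auto
    also have "\<dots> = 4 * cA \<alpha> * r powr \<alpha> * u powr (\<alpha>-1) * (1 + \<mu>*r*u) powr (-(\<alpha>+1))" by simp
    finally have L: "(1 + r\<^sup>2) * r powr \<alpha> * u powr (\<alpha>-1) * exp (- (\<mu> * r * u)) / (1 + ((1-u)*r)\<^sup>2)
       \<le> 4 * cA \<alpha> * r powr \<alpha> * u powr (\<alpha>-1) * (1 + \<mu>*r*u) powr (-(\<alpha>+1))" .
    have "0 \<le> cE \<alpha> * \<mu> powr (-\<alpha>) * u powr (\<alpha>-1)" using cApos by simp
    with L show ?thesis by linarith
  next
    case False
    have q: "(1 + r\<^sup>2) / (1 + ((1-u)*r)\<^sup>2) \<le> 1 + r\<^sup>2"
      using den by (simp add: divide_le_eq) (simp add: algebra_simps add_nonneg_nonneg)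
    have e: "exp (- (\<mu> * r * u)) \<le> exp (- (\<mu> * r) / 2)"
      using False m r by (simp add: mult_left_mono)
    define x where "x = \<mu> * r"
    have x: "0 \<le> x" "r \<le> x" using m r by (auto simp: x_def)
    have rx: "r powr \<alpha> = \<mu> powr (-\<alpha>) * x powr \<alpha>"
      using m r by (simp add: x_def powr_mult powr_minus field_simps)
    have "1 + r\<^sup>2 \<le> 1 + x\<^sup>2" using x r by (simp add: power_mono)
    hence "(1 + r\<^sup>2) * (\<mu> powr (-\<alpha>) * x powr \<alpha> * exp (- x / 2)) \<le> (1 + x\<^sup>2) * (\<mu> powr (-\<alpha>) * x powr \<alpha> * exp (- x / 2))"
      by (rule mult_right_mono) simp
    hence "(1 + r\<^sup>2) * r powr \<alpha> * exp (- (\<mu> * r) / 2) \<le> \<mu> powr (-\<alpha>) * ((1 + x\<^sup>2) * x powr \<alpha> * exp (- x / 2))"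
      unfolding rx x_def[symmetric] by (simp add: ac_simps)
    also have "\<dots> \<le> \<mu> powr (-\<alpha>) * cE \<alpha>"
      unfolding cE_def using a x by (intro mult_left_mono tail_bound) auto
    finally have t: "(1 + r\<^sup>2) * r powr \<alpha> * exp (- (\<mu> * r) / 2) \<le> \<mu> powr (-\<alpha>) * cE \<alpha>" .
    have "(1 + r\<^sup>2) * r powr \<alpha> * u powr (\<alpha>-1) * exp (- (\<mu> * r * u)) / (1 + ((1-u)*r)\<^sup>2)
        = ((1 + r\<^sup>2) / (1 + ((1-u)*r)\<^sup>2)) * r powr \<alpha> * exp (- (\<mu> * r * u)) * u powr (\<alpha>-1)" by simp
    also have "\<dots> \<le> (1 + r\<^sup>2) * r powr \<alpha> * exp (- (\<mu> * r) / 2) * u powr (\<alpha>-1)"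
      using q e by (intro mult_right_mono mult_mono) auto
    also have "\<dots> \<le> \<mu> powr (-\<alpha>) * cE \<alpha> * u powr (\<alpha>-1)"
      using t by (intro mult_right_mono) auto
    also have "\<dots> = cE \<alpha> * \<mu> powr (-\<alpha>) * u powr (\<alpha>-1)" by simp
    finally have L: "(1 + r\<^sup>2) * r powr \<alpha> * u powr (\<alpha>-1) * exp (- (\<mu> * r * u)) / (1 + ((1-u)*r)\<^sup>2)
       \<le> cE \<alpha> * \<mu> powr (-\<alpha>) * u powr (\<alpha>-1)" .
    have "0 \<le> 4 * cA \<alpha> * r powr \<alpha> * u powr (\<alpha>-1) * (1 + \<mu>*r*u) powr (-(\<alpha>+1))" using cApos by simp
    with L show ?thesis by linarith
  qed
qed


lemma has_integral_powr_interval: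
  fixes \<alpha> c d :: real assumes a: "0 < \<alpha>" and cd: "0 \<le> c" "c \<le> d"
  shows "((\<lambda>u. u powr (\<alpha>-1)) has_integral (d powr \<alpha> / \<alpha> - c powr \<alpha> / \<alpha>)) {c..d}"
proof -
  have "((\<lambda>u. u powr (\<alpha>-1)) has_integral ((\<lambda>u. u powr \<alpha> / \<alpha>) d - (\<lambda>u. u powr \<alpha> / \<alpha>) c)) {c..d}"
  proof (rule fundamental_theorem_of_calculus_interior_strong[where S="{}"])
    show "continuous_on {c..d} (\<lambda>u. u powr \<alpha> / \<alpha>)"
      using a cd by (intro continuous_intros continuous_on_powr') auto
    fix x assume x: "x \<in> {c<..<d} - {}"
    hence "x > 0" using cd by auto
    hence "((\<lambda>u. u powr \<alpha> / \<alpha>) has_real_derivative (\<alpha> * x powr (\<alpha>-1)) / \<alpha>) (at x)"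
      by (intro DERIV_cdivide has_real_derivative_powr)
    thus "((\<lambda>u. u powr \<alpha> / \<alpha>) has_vector_derivative x powr (\<alpha>-1)) (at x)"
      using a by (simp add: has_real_derivative_iff_has_vector_derivative)
  qed (use cd in auto)
  thus ?thesis by simp
qed

lemma has_integral_rat:
  fixes \<alpha> k :: real assumes a: "0 < \<alpha>" and k: "0 \<le> k"
  shows "((\<lambda>u. u powr (\<alpha>-1) * (1 + k*u) powr (-(\<alpha>+1))) has_integral ((1+k) powr (-\<alpha>) / \<alpha>)) {0..1}"
proof -
  define F where "F = (\<lambda>u::real. u powr \<alpha> * (1 + k*u) powr (-\<alpha>) / \<alpha>)"
  have "((\<lambda>u. u powr (\<alpha>-1) * (1 + k*u) powr (-(\<alpha>+1))) has_integral (F 1 - F 0)) {0..1}"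
  proof (rule fundamental_theorem_of_calculus_interior_strong[where S="{}"])
    have c1: "continuous_on {0..1} (\<lambda>u::real. u powr \<alpha>)"
      by (rule continuous_on_powr') (use a in \<open>auto intro: continuous_intros\<close>)
    have c2': "\<forall>u\<in>{0..1::real}. 1 + k*u \<noteq> 0"
    proof
      fix u :: real assume "u \<in> {0..1}"
      hence "0 \<le> k*u" using k by simp
      thus "1 + k*u \<noteq> 0" by linarith
    qed
    have c2: "continuous_on {0..1} (\<lambda>u::real. (1 + k*u) powr (-\<alpha>))"
      by (rule continuous_on_powr) (use c2' in \<open>auto intro!: continuous_intros\<close>)
    show "continuous_on {0..1} F" unfolding F_def
      by (intro continuous_on_divide continuous_on_mult c1 c2 continuous_on_const) (use a in auto)
    fix x :: real assume x: "x \<in> {0<..<1} - {}"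
    hence x0: "x > 0" by auto
    have g: "1 + k*x > 0" using x0 k by (simp add: add_pos_nonneg)
    have d1: "((\<lambda>u. u powr \<alpha>) has_real_derivative \<alpha> * x powr (\<alpha>-1)) (at x)"
      using x0 by (rule has_real_derivative_powr)
    have d2: "((\<lambda>u. (1 + k*u) powr (-\<alpha>)) has_real_derivative (-\<alpha>) * (1 + k*x) powr (-\<alpha> - of_nat 1) * k) (at x)"
      by (rule DERIV_fun_powr) (auto intro!: derivative_eq_intros simp: g)
    have e1: "(1 + k*x) powr (-\<alpha>) = (1 + k*x) powr (-(\<alpha>+1)) * (1 + k*x)"
    proof -
      have "(1 + k*x) powr (-(\<alpha>+1)) * (1 + k*x) = (1 + k*x) powr (-(\<alpha>+1)) * (1 + k*x) powr 1" using g by simp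
      also have "\<dots> = (1 + k*x) powr (-(\<alpha>+1) + 1)" by (rule powr_add[symmetric])
      finally show ?thesis by simp
    qed
    have e2: "x powr \<alpha> = x powr (\<alpha>-1) * x"
    proof -
      have "x powr (\<alpha>-1) * x = x powr (\<alpha>-1) * x powr 1" using x0 by simp
      also have "\<dots> = x powr (\<alpha>-1 + 1)" by (rule powr_add[symmetric])
      finally show ?thesis by simp
    qed
    have e3: "(1 + k*x) powr (-\<alpha> - of_nat 1) = (1 + k*x) powr (-(\<alpha>+1))"
      by (rule arg_cong[where f="\<lambda>e. (1 + k*x) powr e"]) simp
    have d: "(F has_real_derivative x powr (\<alpha>-1) * (1 + k*x) powr (-(\<alpha>+1))) (at x)"
      unfolding F_def
    proof (rule DERIV_cong[OF DERIV_cdivide[OF DERIV_mult[OF d1 d2]]])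
      show "(\<alpha> * x powr (\<alpha>-1) * (1+k*x) powr (-\<alpha>) + (-\<alpha>) * (1+k*x) powr (-\<alpha> - of_nat 1) * k * x powr \<alpha>) / \<alpha>
         = x powr (\<alpha>-1) * (1+k*x) powr (-(\<alpha>+1))"
        unfolding e3 unfolding e1 e2 using a by (simp add: field_simps)
    qed
    thus "(F has_vector_derivative x powr (\<alpha>-1) * (1 + k*x) powr (-(\<alpha>+1))) (at x)"
      by (simp add: has_real_derivative_iff_has_vector_derivative)
  qed auto
  moreover have "F 1 - F 0 = (1+k) powr (-\<alpha>) / \<alpha>" unfolding F_def using a by simp
  ultimately show ?thesis by simp
qed


definition gg :: "(complex \<Rightarrow> complex) \<Rightarrow> (complex \<Rightarrow> complex) \<Rightarrow> complex \<Rightarrow> real \<Rightarrow> complex" where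
  "gg h f p u = (if u = 0 then 0 else h (of_real u * p) * f (of_real (1-u) * p) * p)"

lemma gg_zero [simp]: "gg h f 0 u = 0" by (simp add: gg_def)

locale convloc =
  fixes S :: "complex set" and h f :: "complex \<Rightarrow> complex" and C \<alpha> \<rho> :: real
  assumes openS: "open S" and S0: "0 \<notin> S"
    and coneS: "\<And>c q. 0 < c \<Longrightarrow> q \<in> S \<Longrightarrow> of_real c * q \<in> S"
    and conecl: "\<And>c q. 0 \<le> c \<Longrightarrow> q \<in> closure S \<Longrightarrow> of_real c * q \<in> closure S"
    and hhol: "h holomorphic_on S" and hcont: "continuous_on (closure S - {0}) h"
    and hbnd: "\<And>q. q \<in> closure S \<Longrightarrow> q \<noteq> 0 \<Longrightarrow> cmod (h q) \<le> C * cmod q powr (\<alpha> - 1) * exp (\<rho> * cmod q)"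
    and fhol: "f holomorphic_on S" and fcont: "continuous_on (closure S) f"
    and Cpos: "0 < C" and apos: "0 < \<alpha>" and rpos: "0 < \<rho>"
begin

lemma fbound: "\<exists>M\<ge>0. \<forall>q\<in>closure S. cmod q \<le> b \<longrightarrow> cmod (f q) \<le> M"
proof -
  have "compact (cball 0 b \<inter> closure S)" by (intro compact_Int_closed) auto
  moreover have "continuous_on (cball 0 b \<inter> closure S) f" by (rule continuous_on_subset[OF fcont]) auto
  ultimately have "compact (f ` (cball 0 b \<inter> closure S))" by (rule compact_continuous_image[rotated])
  hence "bounded (f ` (cball 0 b \<inter> closure S))" by (rule compact_imp_bounded)
  then obtain M where M: "\<forall>y\<in>f ` (cball 0 b \<inter> closure S). norm y \<le> M" unfolding bounded_iff by blast
  show ?thesis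
    by (rule exI[of _ "max M 0"]) (use M in \<open>auto simp: dist_norm intro: le_max_iff_disj[THEN iffD2]\<close>)
qed

lemma gg_bound:
  assumes p: "p \<in> closure S" "cmod p \<le> b" and u: "u \<in> {0..1}" and M: "0 \<le> M"
    and fM: "\<forall>q\<in>closure S. cmod q \<le> b \<longrightarrow> cmod (f q) \<le> M"
  shows "cmod (gg h f p u) \<le> C * exp (\<rho>*b) * M * cmod p powr \<alpha> * u powr (\<alpha>-1)"
proof (cases "u = 0 \<or> p = 0")
  case True
  have "0 \<le> C * exp (\<rho>*b) * M * cmod p powr \<alpha> * u powr (\<alpha>-1)"
    using Cpos M by simp
  with True show ?thesis by (auto simp: gg_def)
next
  case False
  hence u0: "0 < u" "u \<le> 1" and p0: "p \<noteq> 0" using u by auto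
  define r where "r = cmod p"
  have r0: "0 < r" using p0 by (simp add: r_def)
  have up: "of_real u * p \<in> closure S" "of_real u * p \<noteq> 0" using conecl[of u p] u0 p p0 by auto
  have nup: "cmod (of_real u * p) = u * r" using u0 by (simp add: norm_mult r_def)
  have h1: "cmod (h (of_real u * p)) \<le> C * (u * r) powr (\<alpha> - 1) * exp (\<rho> * (u * r))"
    using hbnd[OF up] nup by simp
  have "exp (\<rho> * (u * r)) \<le> exp (\<rho> * b)"
  proof -
    have "u * r \<le> 1 * b" using u0 r0 p by (intro mult_mono) (auto simp: r_def)
    thus ?thesis using rpos by (simp add: mult_left_mono)
  qed
  hence h2: "cmod (h (of_real u * p)) \<le> C * (u * r) powr (\<alpha> - 1) * exp (\<rho> * b)"
    using h1 Cpos by (smt (verit) mult_left_mono mult_nonneg_nonneg powr_ge_zero)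
  have q: "of_real (1-u) * p \<in> closure S" using conecl[of "1-u" p] u0 p by auto
  have "cmod (of_real (1-u) * p) \<le> b"
  proof -
    have n1: "cmod (of_real (1-u) :: complex) = 1 - u" using u0 by (metis abs_of_nonneg diff_ge_0_iff_ge norm_of_real)
    have "cmod (of_real (1-u) * p) = (1-u) * r" unfolding norm_mult n1 r_def ..
    also have "\<dots> \<le> 1 * r" using u0 r0 by (intro mult_right_mono) auto
    finally show ?thesis using p by (simp add: r_def)
  qed
  hence f1: "cmod (f (of_real (1-u) * p)) \<le> M" using fM q by blast
  have "cmod (gg h f p u) = cmod (h (of_real u * p)) * cmod (f (of_real (1-u) * p)) * r"
    using u0 by (simp add: gg_def norm_mult r_def)
  also have "\<dots> \<le> (C * (u * r) powr (\<alpha> - 1) * exp (\<rho> * b)) * M * r"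
    using h2 f1 r0 Cpos by (intro mult_right_mono mult_mono) auto
  also have "\<dots> = C * exp (\<rho>*b) * M * (r powr (\<alpha>-1) * r) * u powr (\<alpha>-1)"
    using u0 r0 by (simp add: powr_mult)
  also have "r powr (\<alpha>-1) * r = r powr \<alpha>"
  proof -
    have "r powr (\<alpha>-1) * r = r powr (\<alpha>-1) * r powr 1" using r0 by simp
    also have "\<dots> = r powr (\<alpha>-1 + 1)" by (rule powr_add[symmetric])
    finally show ?thesis by simp
  qed
  finally show ?thesis by (simp add: r_def)
qed

lemma gg_cont:
  assumes U: "U \<subseteq> closure S - {0}" and I: "I \<subseteq> {0<..1}"
  shows "continuous_on (U \<times> I) (\<lambda>z. gg h f (fst z) (snd z))"
proof -
  have eq: "\<And>z. z \<in> U \<times> I \<Longrightarrow> gg h f (fst z) (snd z) = h (of_real (snd z) * fst z) * f (of_real (1 - snd z) * fst z) * fst z"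
    using I by (auto simp: gg_def)
  have c1: "continuous_on (U \<times> I) (\<lambda>z. h (of_real (snd z) * fst z))"
  proof (rule continuous_on_compose2[OF hcont])
    show "continuous_on (U \<times> I) (\<lambda>z. of_real (snd z) * fst z)" by (intro continuous_intros)
    show "(\<lambda>z. of_real (snd z) * fst z) ` (U \<times> I) \<subseteq> closure S - {0}"
    proof safe
      fix a b assume ab: "a \<in> U" "b \<in> I"
      have "0 < b" using I ab by auto
      moreover have "a \<in> closure S" using U ab by auto
      ultimately show "of_real (snd (a, b)) * fst (a, b) \<in> closure S" using conecl[of b a] by simp
      show "of_real (snd (a, b)) * fst (a, b) = 0 \<Longrightarrow> False" using U I ab by auto
    qed
  qed
  have c2: "continuous_on (U \<times> I) (\<lambda>z. f (of_real (1 - snd z) * fst z))"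
  proof (rule continuous_on_compose2[OF fcont])
    show "continuous_on (U \<times> I) (\<lambda>z. of_real (1 - snd z) * fst z)" by (intro continuous_intros)
    show "(\<lambda>z. of_real (1 - snd z) * fst z) ` (U \<times> I) \<subseteq> closure S"
    proof (rule image_subsetI)
      fix z assume z: "z \<in> U \<times> I"
      hence "0 \<le> 1 - snd z" "fst z \<in> closure S" using U I by auto
      thus "of_real (1 - snd z) * fst z \<in> closure S" by (rule conecl)
    qed
  qed
  have "continuous_on (U \<times> I) (\<lambda>z. h (of_real (snd z) * fst z) * f (of_real (1 - snd z) * fst z) * fst z)"
    by (intro continuous_intros c1 c2)
  thus ?thesis by (rule continuous_on_eq) (simp add: eq)
qed

lemma gg_cont1:
  assumes p: "p \<in> closure S" shows "continuous_on {0<..1} (gg h f p)"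
proof (cases "p = 0")
  case True
  have "gg h f p = (\<lambda>_. 0)" using True by (auto simp: gg_def)
  thus ?thesis by simp
next
  case False
  have cj: "continuous_on ({p} \<times> {0<..1}) (\<lambda>z. gg h f (fst z) (snd z))"
    using p False by (intro gg_cont) auto
  have ci: "continuous_on {0<..1} (\<lambda>u::real. (p, u))" by (intro continuous_intros)
  have sub: "(\<lambda>u::real. (p, u)) ` {0<..1} \<subseteq> {p} \<times> {0<..1}" by auto
  have "continuous_on {0<..1} (\<lambda>u. gg h f (fst (p, u)) (snd (p, u)))"
    by (rule continuous_on_compose2[OF cj ci sub])
  thus ?thesis by simp
qed

lemma powr_int01: "(\<lambda>u::real. u powr (\<alpha>-1)) integrable_on {0<..1}"
proof -
  have "(\<lambda>u::real. u powr (\<alpha>-1)) integrable_on {0..1}"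
    using has_integral_powr_interval[OF apos order_refl zero_le_one] by blast
  moreover have "negligible (({0..1} - {0<..1}) \<union> ({0<..1} - {0..1::real}))"
    by (rule negligible_subset[of "{0}"]) auto
  ultimately show ?thesis using integrable_spike_set_eq by blast
qed

lemma Ioc_lebesgue: "{0<..1::real} \<in> sets lebesgue"
  by (rule sets_completionI_sets) (simp add: greaterThanAtMost_borel)

lemma gg_absint:
  assumes p: "p \<in> closure S" shows "gg h f p absolutely_integrable_on {0..1}"
proof -
  obtain M where M: "0 \<le> M" "\<forall>q\<in>closure S. cmod q \<le> cmod p \<longrightarrow> cmod (f q) \<le> M"
    using fbound by blast
  define D where "D = C * exp (\<rho> * cmod p) * M * cmod p powr \<alpha>"
  have "gg h f p absolutely_integrable_on {0<..1}"
  proof (rule measurable_bounded_by_integrable_imp_absolutely_integrable)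
    show "gg h f p \<in> borel_measurable (lebesgue_on {0<..1})"
      by (rule continuous_imp_measurable_on_sets_lebesgue[OF gg_cont1[OF p] Ioc_lebesgue])
    show "{0<..1::real} \<in> sets lebesgue" by (rule Ioc_lebesgue)
    show "(\<lambda>u. D * u powr (\<alpha>-1)) integrable_on {0<..1}"
      using powr_int01 by (rule integrable_on_mult_right)
    fix u :: real assume "u \<in> {0<..1}"
    hence "u \<in> {0..1}" by auto
    from gg_bound[OF p order_refl this M]
    show "norm (gg h f p u) \<le> D * u powr (\<alpha>-1)" unfolding D_def .
  qed
  hence i1: "gg h f p integrable_on {0<..1}" and i2: "(\<lambda>u. norm (gg h f p u)) integrable_on {0<..1}"
    unfolding absolutely_integrable_on_def by auto
  have neg: "negligible (({0..1} - {0<..1}) \<union> ({0<..1} - {0..1::real}))"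
    by (rule negligible_subset[of "{0}"]) auto
  show ?thesis unfolding absolutely_integrable_on_def
    using integrable_spike_set_eq[OF neg, THEN iffD2, OF i1] integrable_spike_set_eq[OF neg, THEN iffD2, OF i2]
    by simp
qed

lemma conv_eq:
  "contour_integral (linepath 0 p) (\<lambda>s. h s * f (p - s)) = integral {0..1} (gg h f p)"
proof -
  have "contour_integral (linepath 0 p) (\<lambda>s. h s * f (p - s))
      = integral {0..1} (\<lambda>x. h (of_real x * p) * f (p - of_real x * p) * p)"
    unfolding contour_integral_integral by (simp add: linepath_def scaleR_conv_of_real)
  also have "\<dots> = integral {0..1} (gg h f p)"
  proof (rule integral_spike[of "{0}"])
    fix x :: real assume "x \<in> {0..1} - {0}"
    thus "gg h f p x = h (of_real x * p) * f (p - of_real x * p) * p"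
      by (simp add: gg_def algebra_simps)
  qed auto
  finally show ?thesis .
qed

lemma absconv_eq:
  "integral {0..cmod p} (\<lambda>s. cmod (h (of_real s * sgn p)) * cmod (f (p - of_real s * sgn p)))
   = integral {0..1} (\<lambda>u. cmod (gg h f p u))"
proof (cases "p = 0")
  case True thus ?thesis by simp
next
  case False
  define r where "r = cmod p"
  have r0: "0 < r" using False by (simp add: r_def)
  define A where "A = (\<lambda>s. cmod (h (of_real s * sgn p)) * cmod (f (p - of_real s * sgn p)))"
  have img: "(\<lambda>x. x / r) ` {0..r} = {0..1}"
  proof
    show "(\<lambda>x. x / r) ` {0..r} \<subseteq> {0..1}" using r0 by auto
    show "{0..1} \<subseteq> (\<lambda>x. x / r) ` {0..r}"
    proof
      fix y :: real assume y: "y \<in> {0..1}"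
      hence "r * y \<in> {0..r}" using r0 by (auto intro: mult_left_le)
      moreover have "y = (r * y) / r" using r0 by simp
      ultimately show "y \<in> (\<lambda>x. x / r) ` {0..r}" by blast
    qed
  qed
  have "integral {0..1} (\<lambda>x. A (r * x)) = (1 / r) *\<^sub>R integral {0..r} A"
    using integral_stretch_real[of r 0 r A] r0 unfolding img by simp
  hence st: "integral {0..r} A = r * integral {0..1} (\<lambda>x. A (r * x))" using r0 by simp
  have rs: "of_real r * sgn p = p" using r0 by (simp add: r_def sgn_div_norm scaleR_conv_of_real)
  have "integral {0..r} A = integral {0..1} (\<lambda>x. r * A (r * x))" using st by simp
  also have "\<dots> = integral {0..1} (\<lambda>u. cmod (gg h f p u))"
  proof (rule integral_spike[of "{0}"])
    fix x :: real assume "x \<in> {0..1} - {0}"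
    hence x0: "x \<noteq> 0" by auto
    have e1: "of_real (r * x) * sgn p = of_real x * p" using rs by (simp add: mult_ac)
    have e2: "p - of_real x * p = of_real (1 - x) * p" by (simp add: algebra_simps)
    show "cmod (gg h f p x) = r * A (r * x)"
      unfolding A_def e1 e2 using x0 by (simp add: gg_def norm_mult r_def mult_ac)
  qed auto
  finally show ?thesis by (simp add: A_def r_def)
qed

lemma I_norm_le:
  assumes "p \<in> closure S"
  shows "cmod (integral {0..1} (gg h f p)) \<le> integral {0..1} (\<lambda>u. cmod (gg h f p u))"
  using gg_absint[OF assms] unfolding absolutely_integrable_on_def
  by (intro integral_norm_bound_integral) auto

lemma absI_nonneg:
  assumes "p \<in> closure S"
  shows "0 \<le> integral {0..1} (\<lambda>u. cmod (gg h f p u))"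
  using gg_absint[OF assms] unfolding absolutely_integrable_on_def
  by (intro integral_nonneg) auto

lemma I_local_bound:
  assumes p: "p \<in> closure S" "cmod p \<le> b" and M: "0 \<le> M" "\<forall>q\<in>closure S. cmod q \<le> b \<longrightarrow> cmod (f q) \<le> M"
  shows "cmod (integral {0..1} (gg h f p)) \<le> C * exp (\<rho>*b) * M * cmod p powr \<alpha> / \<alpha>"
proof -
  define D where "D = C * exp (\<rho>*b) * M * cmod p powr \<alpha>"
  have hi: "((\<lambda>u. D * u powr (\<alpha>-1)) has_integral D * (1 / \<alpha>)) {0..1}"
  proof -
    have e: "1 powr \<alpha> / \<alpha> - 0 powr \<alpha> / \<alpha> = 1 / \<alpha>" by simp
    show ?thesis using has_integral_mult_right[OF has_integral_powr_interval[OF apos order_refl zero_le_one], of D]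
      unfolding e .
  qed
  have "cmod (integral {0..1} (gg h f p)) \<le> integral {0..1} (\<lambda>u. D * u powr (\<alpha>-1))"
  proof (rule integral_norm_bound_integral)
    show "gg h f p integrable_on {0..1}" using gg_absint[OF p(1)] by (simp add: absolutely_integrable_on_def)
    show "(\<lambda>u. D * u powr (\<alpha>-1)) integrable_on {0..1}" using hi by blast
    fix u :: real assume "u \<in> {0..1}"
    thus "norm (gg h f p u) \<le> D * u powr (\<alpha>-1)" using gg_bound[OF p _ M] unfolding D_def by blast
  qed
  also have "\<dots> = D * (1 / \<alpha>)" by (rule integral_unique[OF hi])
  finally show ?thesis by (simp add: D_def)
qed

end

definition aseq :: "nat \<Rightarrow> real" where "aseq n = inverse (real (Suc n)) / 2"

lemma aseq_pos: "0 < aseq n" and aseq_le: "aseq n \<le> 1/2"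
  by (auto simp: aseq_def field_simps)

lemma aseq_lim: "aseq \<longlonglongrightarrow> 0"
proof -
  have "(\<lambda>n. inverse (real (Suc n)) / 2) \<longlonglongrightarrow> 0 / 2"
    by (intro tendsto_divide LIMSEQ_inverse_real_of_nat tendsto_const) auto
  thus ?thesis by (simp add: aseq_def[abs_def])
qed

lemma tailT_lim:
  fixes \<alpha> D :: real assumes a: "0 < \<alpha>"
  shows "(\<lambda>n. D * (aseq n powr \<alpha> / \<alpha> + (1/\<alpha> - (1 - aseq n) powr \<alpha> / \<alpha>))) \<longlonglongrightarrow> 0"
proof -
  have l1: "(\<lambda>n. aseq n powr \<alpha>) \<longlonglongrightarrow> 0"
    by (rule tendsto_zero_powrI[OF aseq_lim tendsto_const]) (use a aseq_pos in \<open>auto intro: always_eventually less_imp_le\<close>)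
  have l2': "(\<lambda>n. 1 - aseq n) \<longlonglongrightarrow> 1 - 0" by (intro tendsto_diff tendsto_const aseq_lim)
  have l2: "(\<lambda>n. (1 - aseq n) powr \<alpha>) \<longlonglongrightarrow> (1 - 0) powr \<alpha>"
    by (rule tendsto_powr[OF l2' tendsto_const]) simp
  have "(\<lambda>n. D * (aseq n powr \<alpha> / \<alpha> + (1/\<alpha> - (1 - aseq n) powr \<alpha> / \<alpha>))) \<longlonglongrightarrow> D * (0 / \<alpha> + (1/\<alpha> - (1 - 0) powr \<alpha> / \<alpha>))"
    by (intro tendsto_mult tendsto_const tendsto_add tendsto_diff tendsto_divide l1 l2) (use a in auto)
  thus ?thesis by simp
qed

context convloc
begin

lemma int_seg_bound:
  assumes p: "p \<in> closure S" "cmod p \<le> b" and M: "0 \<le> M" "\<forall>q\<in>closure S. cmod q \<le> b \<longrightarrow> cmod (f q) \<le> M"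
    and cd: "0 \<le> c" "c \<le> d" "d \<le> 1"
  shows "cmod (integral {c..d} (gg h f p)) \<le> C * exp (\<rho>*b) * M * b powr \<alpha> * (d powr \<alpha> / \<alpha> - c powr \<alpha> / \<alpha>)"
proof -
  define D where "D = C * exp (\<rho>*b) * M * b powr \<alpha>"
  have D0: "0 \<le> C * exp (\<rho>*b) * M" using Cpos M by simp
  have hi: "((\<lambda>u. D * u powr (\<alpha>-1)) has_integral D * (d powr \<alpha> / \<alpha> - c powr \<alpha> / \<alpha>)) {c..d}"
    by (rule has_integral_mult_right[OF has_integral_powr_interval[OF apos cd(1,2)]])
  have "cmod (integral {c..d} (gg h f p)) \<le> integral {c..d} (\<lambda>u. D * u powr (\<alpha>-1))"
  proof (rule integral_norm_bound_integral)
    have "gg h f p integrable_on {0..1}" using gg_absint[OF p(1)] by (simp add: absolutely_integrable_on_def)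
    thus "gg h f p integrable_on {c..d}" by (rule integrable_on_subinterval) (use cd in auto)
    show "(\<lambda>u. D * u powr (\<alpha>-1)) integrable_on {c..d}" using hi by blast
    fix u :: real assume u: "u \<in> {c..d}"
    hence u01: "u \<in> {0..1}" using cd by auto
    have "cmod p powr \<alpha> \<le> b powr \<alpha>" using p apos by (intro powr_mono2) auto
    hence "C * exp (\<rho>*b) * M * cmod p powr \<alpha> \<le> D" unfolding D_def using D0 by (intro mult_left_mono) auto
    hence "C * exp (\<rho>*b) * M * cmod p powr \<alpha> * u powr (\<alpha>-1) \<le> D * u powr (\<alpha>-1)"
      by (intro mult_right_mono) auto
    with gg_bound[OF p u01 M] show "norm (gg h f p u) \<le> D * u powr (\<alpha>-1)" by simp
  qed
  also have "\<dots> = D * (d powr \<alpha> / \<alpha> - c powr \<alpha> / \<alpha>)" by (rule integral_unique[OF hi])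
  finally show ?thesis by (simp add: D_def)
qed

lemma tail:
  assumes p: "p \<in> closure S" "cmod p \<le> b" and M: "0 \<le> M" "\<forall>q\<in>closure S. cmod q \<le> b \<longrightarrow> cmod (f q) \<le> M"
    and a: "0 < a" "a \<le> 1/2"
  shows "cmod (integral {0..1} (gg h f p) - integral {a..1-a} (gg h f p))
     \<le> C * exp (\<rho>*b) * M * b powr \<alpha> * (a powr \<alpha> / \<alpha> + (1/\<alpha> - (1-a) powr \<alpha> / \<alpha>))"
proof -
  define g where "g = gg h f p"
  have int: "g integrable_on {0..1}" using gg_absint[OF p(1)] by (simp add: absolutely_integrable_on_def g_def)
  have s1: "integral {0..a} g + integral {a..1} g = integral {0..1} g"
    by (rule Henstock_Kurzweil_Integration.integral_combine) (use a int in auto)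
  have int2: "g integrable_on {a..1}" by (rule integrable_on_subinterval[OF int]) (use a in auto)
  have s2: "integral {a..1-a} g + integral {1-a..1} g = integral {a..1} g"
    by (rule Henstock_Kurzweil_Integration.integral_combine) (use a int2 in auto)
  have eq: "integral {0..1} g - integral {a..1-a} g = integral {0..a} g + integral {1-a..1} g"
    using s1 s2 by (simp add: algebra_simps)
  have b1: "cmod (integral {0..a} g) \<le> C * exp (\<rho>*b) * M * b powr \<alpha> * (a powr \<alpha> / \<alpha> - 0 powr \<alpha> / \<alpha>)"
    unfolding g_def by (rule int_seg_bound[OF p M]) (use a in auto)
  have b2: "cmod (integral {1-a..1} g) \<le> C * exp (\<rho>*b) * M * b powr \<alpha> * (1 powr \<alpha> / \<alpha> - (1-a) powr \<alpha> / \<alpha>)"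
    unfolding g_def by (rule int_seg_bound[OF p M]) (use a in auto)
  have "cmod (integral {0..1} g - integral {a..1-a} g) \<le> cmod (integral {0..a} g) + cmod (integral {1-a..1} g)"
    unfolding eq by (rule norm_triangle_ineq)
  also have "\<dots> \<le> C * exp (\<rho>*b) * M * b powr \<alpha> * (a powr \<alpha> / \<alpha> - 0 powr \<alpha> / \<alpha>)
      + C * exp (\<rho>*b) * M * b powr \<alpha> * (1 powr \<alpha> / \<alpha> - (1-a) powr \<alpha> / \<alpha>)"
    using b1 b2 by linarith
  also have "\<dots> = C * exp (\<rho>*b) * M * b powr \<alpha> * (a powr \<alpha> / \<alpha> + (1/\<alpha> - (1-a) powr \<alpha> / \<alpha>))"
    using apos by (simp add: algebra_simps)
  finally show ?thesis by (simp add: g_def)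
qed

lemma unif:
  assumes W: "W \<subseteq> closure S" "\<And>x. x \<in> W \<Longrightarrow> cmod x \<le> b"
  shows "uniform_limit W (\<lambda>n p. integral {aseq n..1 - aseq n} (gg h f p)) (\<lambda>p. integral {0..1} (gg h f p)) sequentially"
proof (rule uniform_limitI)
  fix e :: real assume e: "0 < e"
  obtain M where M: "0 \<le> M" "\<forall>q\<in>closure S. cmod q \<le> b \<longrightarrow> cmod (f q) \<le> M" using fbound by blast
  define D where "D = C * exp (\<rho>*b) * M * b powr \<alpha>"
  have "(\<lambda>n. D * (aseq n powr \<alpha> / \<alpha> + (1/\<alpha> - (1 - aseq n) powr \<alpha> / \<alpha>))) \<longlonglongrightarrow> 0"
    by (rule tailT_lim[OF apos])
  hence ev: "\<forall>\<^sub>F n in sequentially. D * (aseq n powr \<alpha> / \<alpha> + (1/\<alpha> - (1 - aseq n) powr \<alpha> / \<alpha>)) < e"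
    using e by (rule order_tendstoD(2))
  show "\<forall>\<^sub>F n in sequentially. \<forall>x\<in>W. dist (integral {aseq n..1 - aseq n} (gg h f x)) (integral {0..1} (gg h f x)) < e"
    using ev
  proof eventually_elim
    case (elim n)
    show ?case
    proof
      fix x assume x: "x \<in> W"
      have "dist (integral {aseq n..1 - aseq n} (gg h f x)) (integral {0..1} (gg h f x))
          = cmod (integral {0..1} (gg h f x) - integral {aseq n..1 - aseq n} (gg h f x))"
        by (simp add: dist_norm norm_minus_commute)
      also have "\<dots> \<le> D * (aseq n powr \<alpha> / \<alpha> + (1/\<alpha> - (1 - aseq n) powr \<alpha> / \<alpha>))"
        unfolding D_def using W x by (intro tail M aseq_pos aseq_le) auto
      also have "\<dots> < e" by (rule elim)
      finally show "dist (integral {aseq n..1 - aseq n} (gg h f x)) (integral {0..1} (gg h f x)) < e" .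
    qed
  qed
qed

lemma J_cont:
  assumes a: "0 < a" "a \<le> 1 - a" and U: "U \<subseteq> closure S - {0}"
  shows "continuous_on U (\<lambda>p. integral {a..1-a} (gg h f p))"
proof -
  have "continuous_on (U \<times> {a..1-a}) (\<lambda>z. gg h f (fst z) (snd z))"
    by (rule gg_cont[OF U]) (use a in auto)
  hence "continuous_on (U \<times> cbox a (1-a)) (\<lambda>(x, t). gg h f x t)"
    by (simp add: case_prod_unfold cbox_interval)
  hence "continuous_on U (\<lambda>x. integral (cbox a (1-a)) (gg h f x))"
    by (rule integral_continuous_on_param)
  thus ?thesis by (simp add: cbox_interval)
qed

end

context convloc
begin

lemma J_hol:
  assumes a: "0 < a" "a \<le> 1 - a" and V: "ball z e \<subseteq> S"
  shows "(\<lambda>p. integral {a..1-a} (gg h f p)) holomorphic_on ball z e"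
proof -
  define V where "V = ball z e"
  define fx where "fx = (\<lambda>x t. (deriv h (of_real t * x) * of_real t * f (of_real (1-t) * x)
      + deriv f (of_real (1-t) * x) * of_real (1-t) * h (of_real t * x)) * x
      + 1 * (h (of_real t * x) * f (of_real (1-t) * x)))"
  have VS: "V \<subseteq> S" using V by (simp add: V_def)
  have mapS: "of_real t * x \<in> S" "of_real (1-t) * x \<in> S" if "x \<in> V" "t \<in> {a..1-a}" for x t
  proof -
    have f: "0 < t" "0 < 1-t" "x \<in> S" using that a VS by auto
    show "of_real t * x \<in> S" by (intro coneS) (use f in auto)
    show "of_real (1-t) * x \<in> S" by (intro coneS) (use f in auto)
  qed
  have der: "((\<lambda>x. gg h f x t) has_field_derivative fx x t) (at x within V)"
    if x: "x \<in> V" and t: "t \<in> cbox a (1-a)" for x t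
  proof -
    have t': "t \<in> {a..1-a}" using t by (simp add: cbox_interval)
    hence t0: "t \<noteq> 0" using a by auto
    have eqf: "(\<lambda>x. gg h f x t) = (\<lambda>x. h (of_real t * x) * f (of_real (1-t) * x) * x)"
      using t0 by (auto simp: gg_def)
    have d1: "((\<lambda>x. of_real t * x) has_field_derivative of_real t) (at x)"
      by (auto intro!: derivative_eq_intros)
    have d2: "((\<lambda>x. of_real (1-t) * x) has_field_derivative of_real (1-t)) (at x)"
      by (auto intro!: derivative_eq_intros)
    have dA: "((\<lambda>x. h (of_real t * x)) has_field_derivative deriv h (of_real t * x) * of_real t) (at x)"
      by (rule DERIV_chain2[OF holomorphic_derivI[OF hhol openS mapS(1)[OF x t']] d1])
    have dB: "((\<lambda>x. f (of_real (1-t) * x)) has_field_derivative deriv f (of_real (1-t) * x) * of_real (1-t)) (at x)"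
      by (rule DERIV_chain2[OF holomorphic_derivI[OF fhol openS mapS(2)[OF x t']] d2])
    have "((\<lambda>x. h (of_real t * x) * f (of_real (1-t) * x) * x) has_field_derivative fx x t) (at x)"
      unfolding fx_def by (rule DERIV_mult[OF DERIV_mult[OF dA dB] DERIV_ident])
    thus ?thesis unfolding eqf by (rule has_field_derivative_at_within)
  qed
  have intg: "(gg h f x) integrable_on cbox a (1-a)" if "x \<in> V" for x
  proof -
    have "x \<in> closure S" using that VS closure_subset by blast
    hence "gg h f x integrable_on {0..1}" using gg_absint by (simp add: absolutely_integrable_on_def)
    thus ?thesis unfolding cbox_interval by (rule integrable_on_subinterval) (use a in auto)
  qed
  have cfx: "continuous_on (V \<times> cbox a (1-a)) (\<lambda>(x, t). fx x t)"
  proof -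
    define W where "W = V \<times> {a..1-a}"
    have m1: "(\<lambda>z. of_real (snd z) * fst z) ` W \<subseteq> S" using mapS by (auto simp: W_def)
    have m2: "(\<lambda>z. of_real (1 - snd z) * fst z) ` W \<subseteq> S" using mapS by (auto simp: W_def)
    have cm1: "continuous_on W (\<lambda>z. of_real (snd z) * fst z :: complex)" by (intro continuous_intros)
    have cm2: "continuous_on W (\<lambda>z. of_real (1 - snd z) * fst z :: complex)" by (intro continuous_intros)
    have ch: "continuous_on S h" by (rule holomorphic_on_imp_continuous_on[OF hhol])
    have cf: "continuous_on S f" by (rule holomorphic_on_imp_continuous_on[OF fhol])
    have cdh: "continuous_on S (deriv h)" by (rule holomorphic_on_imp_continuous_on[OF holomorphic_deriv[OF hhol openS]])
    have cdf: "continuous_on S (deriv f)" by (rule holomorphic_on_imp_continuous_on[OF holomorphic_deriv[OF fhol openS]])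
    have c1: "continuous_on W (\<lambda>z. h (of_real (snd z) * fst z))" by (rule continuous_on_compose2[OF ch cm1 m1])
    have c2: "continuous_on W (\<lambda>z. f (of_real (1 - snd z) * fst z))" by (rule continuous_on_compose2[OF cf cm2 m2])
    have c3: "continuous_on W (\<lambda>z. deriv h (of_real (snd z) * fst z))" by (rule continuous_on_compose2[OF cdh cm1 m1])
    have c4: "continuous_on W (\<lambda>z. deriv f (of_real (1 - snd z) * fst z))" by (rule continuous_on_compose2[OF cdf cm2 m2])
    have "continuous_on W (\<lambda>z. fx (fst z) (snd z))"
      unfolding fx_def by (intro continuous_intros c1 c2 c3 c4)
    thus ?thesis by (simp add: W_def case_prod_unfold cbox_interval)
  qed
  have "(\<lambda>p. integral (cbox a (1-a)) (gg h f p)) holomorphic_on V"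
    unfolding holomorphic_on_def field_differentiable_def
  proof
    fix x0 assume x0: "x0 \<in> V"
    have "((\<lambda>x. integral (cbox a (1-a)) (gg h f x)) has_field_derivative integral (cbox a (1-a)) (fx x0)) (at x0 within V)"
      by (rule leibniz_rule_field_derivative[where fx=fx, OF der intg cfx x0]) (auto simp: V_def)
    thus "\<exists>f'. ((\<lambda>p. integral (cbox a (1-a)) (gg h f p)) has_field_derivative f') (at x0 within V)" by blast
  qed
  thus ?thesis by (simp add: V_def cbox_interval)
qed

lemma I_hol: "(\<lambda>p. integral {0..1} (gg h f p)) holomorphic_on S"
  unfolding holomorphic_on_def
proof
  fix z assume z: "z \<in> S"
  obtain e where e: "0 < e" "ball z e \<subseteq> S" using openS z unfolding open_contains_ball by blast
  define r where "r = e / 2"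
  have r: "0 < r" "cball z r \<subseteq> ball z e" using e by (auto simp: r_def)
  have ev: "\<forall>\<^sub>F n in sequentially. continuous_on (cball z r) (\<lambda>p. integral {aseq n..1 - aseq n} (gg h f p))
        \<and> (\<lambda>p. integral {aseq n..1 - aseq n} (gg h f p)) holomorphic_on ball z r"
  proof (rule always_eventually, rule allI)
    fix n
    have a: "0 < aseq n" "aseq n \<le> 1 - aseq n" using aseq_pos[of n] aseq_le[of n] by auto
    have hol: "(\<lambda>p. integral {aseq n..1 - aseq n} (gg h f p)) holomorphic_on ball z e"
      by (rule J_hol[OF a e(2)])
    show "continuous_on (cball z r) (\<lambda>p. integral {aseq n..1 - aseq n} (gg h f p))
        \<and> (\<lambda>p. integral {aseq n..1 - aseq n} (gg h f p)) holomorphic_on ball z r"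
      using r hol by (meson holomorphic_on_imp_continuous_on holomorphic_on_subset continuous_on_subset ball_subset_cball subset_trans)
  qed
  have ul: "uniform_limit (cball z r) (\<lambda>n p. integral {aseq n..1 - aseq n} (gg h f p)) (\<lambda>p. integral {0..1} (gg h f p)) sequentially"
  proof (rule unif[where b="cmod z + r"])
    show "cball z r \<subseteq> closure S" using r e closure_subset by blast
    fix x assume "x \<in> cball z r"
    hence "dist z x \<le> r" by simp
    hence "cmod (x - z) \<le> r" by (simp add: dist_norm norm_minus_commute)
    moreover have "cmod x \<le> cmod z + cmod (x - z)" by (metis add.commute diff_add_cancel norm_triangle_ineq)
    ultimately show "cmod x \<le> cmod z + r" by linarith
  qed
  obtain "(\<lambda>p. integral {0..1} (gg h f p)) holomorphic_on ball z r"
    using holomorphic_uniform_limit[OF ev ul] by auto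
  hence "(\<lambda>p. integral {0..1} (gg h f p)) field_differentiable (at z)"
    using r by (intro holomorphic_on_imp_differentiable_at) auto
  thus "(\<lambda>p. integral {0..1} (gg h f p)) field_differentiable (at z within S)"
    by (rule field_differentiable_at_within)
qed

lemma I_cont: "continuous_on (closure S) (\<lambda>p. integral {0..1} (gg h f p))"
  unfolding continuous_on_eq_continuous_within
proof
  fix p0 assume p0: "p0 \<in> closure S"
  show "continuous (at p0 within closure S) (\<lambda>p. integral {0..1} (gg h f p))"
  proof (cases "p0 = 0")
    case True
    obtain M where M: "0 \<le> M" "\<forall>q\<in>closure S. cmod q \<le> 1 \<longrightarrow> cmod (f q) \<le> M" using fbound by blast
    have ev: "\<forall>\<^sub>F p in at 0 within closure S. norm (integral {0..1} (gg h f p)) \<le> C * exp (\<rho>*1) * M * cmod p powr \<alpha> / \<alpha>"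
      unfolding eventually_at
    proof (intro exI[of _ 1] conjI ballI impI)
      fix p assume "p \<in> closure S" "p \<noteq> 0 \<and> dist p 0 < 1"
      thus "norm (integral {0..1} (gg h f p)) \<le> C * exp (\<rho>*1) * M * cmod p powr \<alpha> / \<alpha>"
        by (intro I_local_bound M) auto
    qed simp
    have ln: "((\<lambda>p. cmod p) \<longlongrightarrow> 0) (at 0 within closure S)"
      using tendsto_norm[OF tendsto_ident_at[of "0::complex" "closure S"]] by simp
    have lp: "((\<lambda>p. cmod p powr \<alpha>) \<longlongrightarrow> 0) (at 0 within closure S)"
      by (rule tendsto_zero_powrI[OF ln tendsto_const]) (auto intro: always_eventually apos)
    have "((\<lambda>p. C * exp (\<rho>*1) * M * cmod p powr \<alpha> / \<alpha>) \<longlongrightarrow> C * exp (\<rho>*1) * M * 0 / \<alpha>) (at 0 within closure S)"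
      using apos by (intro tendsto_intros lp) auto
    hence lg: "((\<lambda>p. C * exp (\<rho>*1) * M * cmod p powr \<alpha> / \<alpha>) \<longlongrightarrow> 0) (at 0 within closure S)" by simp
    have "((\<lambda>p. integral {0..1} (gg h f p)) \<longlongrightarrow> 0) (at 0 within closure S)"
      by (rule Lim_null_comparison[OF ev lg])
    moreover have "gg h f 0 = (\<lambda>u. 0)" by (rule ext) simp
    ultimately show ?thesis using True by (simp add: continuous_within)
  next
    case False
    define r where "r = cmod p0 / 2"
    have r: "0 < r" using False by (simp add: r_def)
    define V where "V = closure S \<inter> cball p0 r"
    have Vn: "cmod x \<le> cmod p0 + r" "0 < cmod x" if "x \<in> V" for x
    proof -
      have "dist p0 x \<le> r" using that by (simp add: V_def)
      hence d: "cmod (x - p0) \<le> r" by (simp add: dist_norm norm_minus_commute)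
      have "cmod x \<le> cmod p0 + cmod (x - p0)" by (metis add.commute diff_add_cancel norm_triangle_ineq)
      thus "cmod x \<le> cmod p0 + r" using d by linarith
      have "cmod p0 \<le> cmod x + cmod (x - p0)" by (metis diff_add_cancel norm_triangle_ineq norm_minus_commute add.commute)
      moreover have "0 < cmod p0" using False by simp
      ultimately show "0 < cmod x" using d r_def by linarith
    qed
    have VS: "V \<subseteq> closure S - {0}" using Vn by (force simp: V_def)
    have cV: "continuous_on V (\<lambda>p. integral {0..1} (gg h f p))"
    proof (rule uniform_limit_theorem)
      show "\<forall>\<^sub>F n in sequentially. continuous_on V (\<lambda>p. integral {aseq n..1 - aseq n} (gg h f p))"
      proof (rule always_eventually, rule allI)
        fix n
        have a: "0 < aseq n" "aseq n \<le> 1 - aseq n" using aseq_pos[of n] aseq_le[of n] by auto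
        show "continuous_on V (\<lambda>p. integral {aseq n..1 - aseq n} (gg h f p))" by (rule J_cont[OF a VS])
      qed
      show "uniform_limit V (\<lambda>n p. integral {aseq n..1 - aseq n} (gg h f p)) (\<lambda>p. integral {0..1} (gg h f p)) sequentially"
        by (rule unif[where b="cmod p0 + r"]) (use Vn in \<open>auto simp: V_def\<close>)
    qed simp
    have p0V: "p0 \<in> V" using p0 r by (simp add: V_def less_imp_le)
    have eqF: "at p0 within closure S = at p0 within V"
      by (rule at_within_nhd[of p0 "ball p0 r"]) (use r in \<open>auto simp: V_def\<close>)
    show ?thesis unfolding eqF using cV p0V by (simp add: continuous_on_eq_continuous_within)
  qed
qed

end

context convloc
begin

lemma weighted_bound:
  assumes p: "p \<in> closure S" and mu: "1 \<le> \<nu> - \<rho>"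
    and SF: "\<forall>q\<in>closure S. (1 + (cmod q)\<^sup>2) * exp (- \<nu> * cmod q) * cmod (f q) \<le> SF" and SF0: "0 \<le> SF"
  shows "(1 + (cmod p)\<^sup>2) * exp (- \<nu> * cmod p) * integral {0..1} (\<lambda>u. cmod (gg h f p u))
      \<le> C * SF * ((4 * cA \<alpha> + cE \<alpha>) / \<alpha> * (\<nu> - \<rho>) powr (- \<alpha>))"
proof -
  have cApos: "0 \<le> cA \<alpha>" "0 \<le> cE \<alpha>" by (auto simp: cA_def cE_def)
  have CS: "0 \<le> C * SF" using Cpos SF0 by simp
  have rhs0: "0 \<le> C * SF * ((4 * cA \<alpha> + cE \<alpha>) / \<alpha> * (\<nu> - \<rho>) powr (- \<alpha>))"
    using CS cApos apos by simp
  show ?thesis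
  proof (cases "p = 0")
    case True
    have "(\<lambda>u. cmod (gg h f p u)) = (\<lambda>u. 0)" using True by simp
    thus ?thesis using rhs0 by simp
  next
    case False
    have pne: "p \<noteq> 0" using False .
    define r where "r = cmod p"
    define \<mu> where "\<mu> = \<nu> - \<rho>"
    have r0: "0 < r" using False by (simp add: r_def)
    have mu1: "1 \<le> \<mu>" using mu by (simp add: \<mu>_def)
    define W where "W = (1 + r\<^sup>2) * exp (- \<nu> * r)"
    have W0: "0 \<le> W" by (simp add: W_def)
    define c1 where "c1 = 4 * cA \<alpha> * r powr \<alpha>"
    define c2 where "c2 = cE \<alpha> * \<mu> powr (-\<alpha>)"
    define R where "R = (\<lambda>u::real. c1 * (u powr (\<alpha>-1) * (1 + (\<mu>*r)*u) powr (-(\<alpha>+1))) + c2 * u powr (\<alpha>-1))"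
    have R0: "0 \<le> R u" for u using cApos by (simp add: R_def c1_def c2_def)
    have hR: "((\<lambda>u. C * SF * R u) has_integral C * SF * (c1 * ((1 + \<mu>*r) powr (-\<alpha>) / \<alpha>) + c2 * (1 powr \<alpha> / \<alpha> - 0 powr \<alpha> / \<alpha>))) {0..1}"
      unfolding R_def
      by (intro has_integral_mult_right has_integral_add has_integral_rat has_integral_powr_interval apos)
         (use mu1 r0 in auto)
    have pw: "W * cmod (gg h f p u) \<le> C * SF * R u" if u: "u \<in> {0..1}" for u
    proof (cases "u = 0")
      case True
      thus ?thesis using CS R0 by (simp add: gg_def)
    next
      case False
      hence u0: "0 < u" "u \<le> 1" using u by auto
      have up: "of_real u * p \<in> closure S" "of_real u * p \<noteq> 0" using conecl[of u p] u0 p pne by auto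
      have nup: "cmod (of_real u * p) = u * r" using u0 by (simp add: norm_mult r_def)
      have hA: "cmod (h (of_real u * p)) \<le> C * (u powr (\<alpha>-1) * r powr (\<alpha>-1)) * exp (\<rho> * (u * r))"
        using hbnd[OF up] nup by (simp add: powr_mult)
      define q where "q = of_real (1-u) * p"
      have q: "q \<in> closure S" unfolding q_def using conecl[of "1-u" p] u0 p by auto
      have n1: "cmod (of_real (1-u) :: complex) = 1 - u" using u0 by (metis abs_of_nonneg diff_ge_0_iff_ge norm_of_real)
      have nq: "cmod q = (1-u) * r" unfolding q_def norm_mult n1 r_def ..
      have den: "0 < (1 + ((1-u)*r)\<^sup>2) * exp (- \<nu> * ((1-u)*r))" by (simp add: add_pos_nonneg)
      have "(1 + ((1-u)*r)\<^sup>2) * exp (- \<nu> * ((1-u)*r)) * cmod (f q) \<le> SF" using SF q nq by metis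
      hence fB0: "cmod (f q) \<le> SF / ((1 + ((1-u)*r)\<^sup>2) * exp (- \<nu> * ((1-u)*r)))"
        using den by (simp add: le_divide_eq mult.commute)
      have fB: "cmod (f q) \<le> SF * exp (\<nu> * ((1-u)*r)) / (1 + ((1-u)*r)\<^sup>2)"
        using fB0 by (simp add: exp_minus divide_simps)
      have gq: "gg h f p u = h (of_real u * p) * f q * p" using u0 by (simp add: gg_def q_def)
      have "W * cmod (gg h f p u) = W * (cmod (h (of_real u * p)) * cmod (f q) * r)"
        by (simp add: gq norm_mult r_def)
      also have "\<dots> \<le> W * ((C * (u powr (\<alpha>-1) * r powr (\<alpha>-1)) * exp (\<rho> * (u * r))) * (SF * exp (\<nu> * ((1-u)*r)) / (1 + ((1-u)*r)\<^sup>2)) * r)"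
        using hA fB W0 r0 Cpos by (intro mult_left_mono mult_right_mono mult_mono) auto
      also have "\<dots> = C * SF * ((1 + r\<^sup>2) * r powr \<alpha> * u powr (\<alpha>-1) * exp (- (\<mu> * r * u)) / (1 + ((1-u)*r)\<^sup>2))"
      proof -
        have e1: "r powr \<alpha> = r powr (\<alpha>-1) * r"
        proof -
          have "r powr (\<alpha>-1) * r = r powr (\<alpha>-1) * r powr 1" using r0 by simp
          also have "\<dots> = r powr (\<alpha>-1 + 1)" by (rule powr_add[symmetric])
          finally show ?thesis by simp
        qed
        have e2: "exp (- (\<mu> * r * u)) = exp (- \<nu> * r) * exp (\<rho> * (u * r)) * exp (\<nu> * ((1-u)*r))"
          unfolding exp_add[symmetric] by (rule arg_cong[where f=exp]) (simp add: \<mu>_def algebra_simps)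
        show ?thesis unfolding e1 e2 W_def by (simp add: field_simps)
      qed
      also have "\<dots> \<le> C * SF * (4 * cA \<alpha> * r powr \<alpha> * u powr (\<alpha>-1) * (1 + \<mu>*r*u) powr (-(\<alpha>+1)) + cE \<alpha> * \<mu> powr (-\<alpha>) * u powr (\<alpha>-1))"
        by (intro mult_left_mono pointwise_bound apos mu1 r0 u0 CS)
      also have "\<dots> = C * SF * R u" by (simp add: R_def c1_def c2_def mult.assoc)
      finally show ?thesis .
    qed
    have absint: "(\<lambda>u. cmod (gg h f p u)) integrable_on {0..1}"
      using gg_absint[OF p] by (simp add: absolutely_integrable_on_def)
    have "W * integral {0..1} (\<lambda>u. cmod (gg h f p u)) = integral {0..1} (\<lambda>u. W * cmod (gg h f p u))"
      by simp
    also have "\<dots> \<le> integral {0..1} (\<lambda>u. C * SF * R u)"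
      by (rule integral_le[OF integrable_on_mult_right[OF absint]]) (use hR pw in blast)+
    also have "\<dots> = C * SF * (c1 * ((1 + \<mu>*r) powr (-\<alpha>) / \<alpha>) + c2 * (1 powr \<alpha> / \<alpha> - 0 powr \<alpha> / \<alpha>))"
      by (rule integral_unique[OF hR])
    also have "\<dots> \<le> C * SF * ((4 * cA \<alpha> + cE \<alpha>) / \<alpha> * \<mu> powr (- \<alpha>))"
    proof -
      have mr: "0 < \<mu> * r" using mu1 r0 by simp
      have "(1 + \<mu>*r) powr (-\<alpha>) \<le> (\<mu>*r) powr (-\<alpha>)" using apos mr by (intro powr_mono2') auto
      hence "r powr \<alpha> * (1 + \<mu>*r) powr (-\<alpha>) \<le> r powr \<alpha> * (\<mu>*r) powr (-\<alpha>)" by (intro mult_left_mono) auto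
      also have "r powr \<alpha> * (\<mu>*r) powr (-\<alpha>) = \<mu> powr (-\<alpha>) * (r powr \<alpha> * r powr (-\<alpha>))" by (simp add: powr_mult)
      also have "r powr \<alpha> * r powr (-\<alpha>) = 1" using r0 by (simp add: powr_add[symmetric])
      finally have key: "r powr \<alpha> * (1 + \<mu>*r) powr (-\<alpha>) \<le> \<mu> powr (-\<alpha>)" by simp
      have "c1 * ((1 + \<mu>*r) powr (-\<alpha>) / \<alpha>) = 4 * cA \<alpha> / \<alpha> * (r powr \<alpha> * (1 + \<mu>*r) powr (-\<alpha>))"
        by (simp add: c1_def)
      also have "\<dots> \<le> 4 * cA \<alpha> / \<alpha> * \<mu> powr (-\<alpha>)" using key cApos apos by (intro mult_left_mono) auto
      finally have t1: "c1 * ((1 + \<mu>*r) powr (-\<alpha>) / \<alpha>) \<le> 4 * cA \<alpha> / \<alpha> * \<mu> powr (-\<alpha>)" .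
      have t2: "c2 * (1 powr \<alpha> / \<alpha> - 0 powr \<alpha> / \<alpha>) = cE \<alpha> / \<alpha> * \<mu> powr (-\<alpha>)"
        using apos by (simp add: c2_def)
      have "c1 * ((1 + \<mu>*r) powr (-\<alpha>) / \<alpha>) + c2 * (1 powr \<alpha> / \<alpha> - 0 powr \<alpha> / \<alpha>) \<le> (4 * cA \<alpha> + cE \<alpha>) / \<alpha> * \<mu> powr (- \<alpha>)"
      proof -
        have X: "(4 * cA \<alpha> + cE \<alpha>) / \<alpha> * \<mu> powr (- \<alpha>) = 4 * cA \<alpha> / \<alpha> * \<mu> powr (-\<alpha>) + cE \<alpha> / \<alpha> * \<mu> powr (-\<alpha>)"
          by (simp add: add_divide_distrib distrib_right)
        show ?thesis unfolding X using t1 t2 by linarith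
      qed
      thus ?thesis using CS by (intro mult_left_mono) auto
    qed
    finally show ?thesis by (simp add: W_def r_def \<mu>_def)
  qed
qed

end

lemma M0_nonneg: "0 \<le> M0"
proof -
  define e where "e = (\<lambda>s::real. 2 * (1 + s\<^sup>2) * (ln (1 + s\<^sup>2) + s * arctan s) / (s * (s\<^sup>2 + 4)))"
  have bd: "e s \<le> 8" if s: "s \<in> {0..}" for s
  proof (cases "s = 0")
    case True thus ?thesis by (simp add: e_def)
  next
    case False
    hence s0: "0 < s" using s by auto
    have l1: "ln (1 + s\<^sup>2) \<le> 2 * s"
    proof -
      have "ln (1 + s\<^sup>2) \<le> ln ((1 + s)^2)"
        using s0 by (subst ln_le_cancel_iff) (auto simp: power2_eq_square algebra_simps add_pos_nonneg)
      also have "\<dots> = 2 * ln (1 + s)" by (simp add: ln_realpow)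
      also have "\<dots> \<le> 2 * s" using ln_add_one_self_le_self[of s] s0 by simp
      finally show ?thesis .
    qed
    have "arctan s \<le> 2" using arctan_ubound[of s] pi_less_4 by linarith
    hence "s * arctan s \<le> s * 2" using s0 by (intro mult_left_mono) auto
    hence l2: "s * arctan s \<le> 2 * s" by simp
    have den: "0 < s * (s\<^sup>2 + 4)" using s0 by (simp add: add_pos_nonneg)
    have "2 * (1 + s\<^sup>2) * (ln (1 + s\<^sup>2) + s * arctan s) \<le> 2 * (1 + s\<^sup>2) * (4 * s)"
      using l1 l2 by (intro mult_left_mono) auto
    also have "\<dots> \<le> 8 * (s * (s\<^sup>2 + 4))" using s0 by (simp add: algebra_simps)
    finally show ?thesis using den by (simp add: e_def divide_le_eq)
  qed
  have "bdd_above (e ` {0..})" by (rule bdd_aboveI2[OF bd])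
  moreover have "e 0 = 0" by (simp add: e_def)
  ultimately have "0 \<le> (SUP s\<in>{0..}. e s)" by (intro cSUP_upper2[of e "{0..}" 0]) auto
  thus ?thesis by (simp add: M0_def e_def)
qed

lemma per_t:
  assumes phi: "0 < \<phi>" "\<phi> < pi / 6" and pos: "0 < C" "0 < \<alpha>" "0 < \<rho>"
    and inH: "in_H \<phi> T H C \<alpha> \<rho>" and AF: "A_phi \<phi> T \<nu> F" and t: "t \<in> {0..T}"
  shows "convloc (sector \<phi>) (\<lambda>p. H p t) (\<lambda>p. F p t) C \<alpha> \<rho>"
proof
  show "open (sector \<phi>)" using phi pi_gt_zero by (intro sector_open) linarith
  show "0 \<notin> sector \<phi>" by (rule zero_notin_sector)
  show "\<And>c q. 0 < c \<Longrightarrow> q \<in> sector \<phi> \<Longrightarrow> of_real c * q \<in> sector \<phi>" by (rule sector_cone)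
  show "\<And>c q. 0 \<le> c \<Longrightarrow> q \<in> closure (sector \<phi>) \<Longrightarrow> of_real c * q \<in> closure (sector \<phi>)"
    using phi by (intro closure_sector_cone) auto
  have H: "(\<lambda>p. H p t) holomorphic_on sector \<phi>" "continuous_on (closure (sector \<phi>) - {0}) (\<lambda>p. H p t)"
     "\<forall>p\<in>sector \<phi>. cmod (H p t) < C * cmod p powr (\<alpha> - 1) * exp (\<rho> * cmod p)"
    using inH t unfolding in_H_def by auto
  show "(\<lambda>p. H p t) holomorphic_on sector \<phi>" by (rule H(1))
  show "continuous_on (closure (sector \<phi>) - {0}) (\<lambda>p. H p t)" by (rule H(2))
  show "\<And>q. q \<in> closure (sector \<phi>) \<Longrightarrow> q \<noteq> 0 \<Longrightarrow> cmod (H q t) \<le> C * cmod q powr (\<alpha> - 1) * exp (\<rho> * cmod q)"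
    using bound_closure[OF H(2), of C \<alpha> \<rho>] H(3) zero_notin_sector by blast
  show "(\<lambda>p. F p t) holomorphic_on sector \<phi>" "continuous_on (closure (sector \<phi>)) (\<lambda>p. F p t)"
    using AF t unfolding A_phi_def by auto
qed (use pos in auto)


theorem lemma9:
  fixes \<phi> T C \<alpha> \<rho> :: real and H :: "complex \<Rightarrow> real \<Rightarrow> complex"
  assumes "0 < \<phi>" and "\<phi> < pi / 6" and "0 < T"
    and "0 < C" and "0 < \<alpha>" and "0 < \<rho>"
    and "in_H \<phi> T H C \<alpha> \<rho>"
  shows "\<exists>K>0. \<forall>\<nu> F. \<rho> + 1 < \<nu> \<longrightarrow> A_phi \<phi> T \<nu> F \<longrightarrow>
           A_phi \<phi> T \<nu> (conv H F) \<and>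
           nu_bounded \<phi> T \<nu> (absconv H F) \<and>
           nu_norm \<phi> T \<nu> (conv H F) \<le> nu_norm \<phi> T \<nu> (absconv H F) \<and>
           nu_norm \<phi> T \<nu> (absconv H F) \<le> K * C * Gamma \<alpha> * (\<nu> - \<rho>) powr (- \<alpha>) * nu_norm \<phi> T \<nu> F"
proof -
  note phi = assms(1,2) and T0 = assms(3) and pos = assms(4,5,6) and inH = assms(7)
  define K where "K = (4 * cA \<alpha> + cE \<alpha>) / (\<alpha> * Gamma \<alpha>)"
  have cApos: "0 < cA \<alpha>" "0 < cE \<alpha>" using pos by (auto simp: cA_def cE_def)
  have G: "0 < Gamma \<alpha>" using pos by simp
  have Kpos: "0 < K" unfolding K_def using cApos G pos by (intro divide_pos_pos) auto
  show ?thesis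
  proof (intro exI[of _ K] conjI allI impI Kpos)
    fix \<nu> :: real and F :: "complex \<Rightarrow> real \<Rightarrow> complex"
    assume nu: "\<rho> + 1 < \<nu>" and AF: "A_phi \<phi> T \<nu> F"
    define S where "S = sector \<phi>"
    define SF where "SF = (SUP x\<in>Kset \<phi> T. weighted \<nu> F x)"
    define B where "B = C * SF * ((4 * cA \<alpha> + cE \<alpha>) / \<alpha> * (\<nu> - \<rho>) powr (- \<alpha>))"
    have mu: "1 \<le> \<nu> - \<rho>" using nu by simp
    have bddF: "bdd_above (weighted \<nu> F ` Kset \<phi> T)" using AF by (simp add: A_phi_def nu_bounded_def)
    have KS: "Kset \<phi> T = closure S \<times> {0..T}" by (simp add: Kset_def S_def)
    have oneK: "(1, 0) \<in> Kset \<phi> T"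
      using one_in_sector[OF phi(1)] closure_subset T0 by (auto simp: Kset_def)
    hence Kne: "Kset \<phi> T \<noteq> {}" by auto
    have SF0: "0 \<le> SF" unfolding SF_def
      by (rule cSUP_upper2[OF bddF oneK]) (simp add: weighted_def)
    have SFq: "\<forall>q\<in>closure S. (1 + (cmod q)\<^sup>2) * exp (- \<nu> * cmod q) * cmod (F q t) \<le> SF"
      if t: "t \<in> {0..T}" for t
    proof
      fix q assume q: "q \<in> closure S"
      hence "(q, t) \<in> Kset \<phi> T" using t KS by auto
      hence "weighted \<nu> F (q, t) \<le> SF" unfolding SF_def by (rule cSUP_upper[OF _ bddF])
      thus "(1 + (cmod q)\<^sup>2) * exp (- \<nu> * cmod q) * cmod (F q t) \<le> SF" by (simp add: weighted_def)
    qed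
    have loc: "convloc S (\<lambda>p. H p t) (\<lambda>p. F p t) C \<alpha> \<rho>" if "t \<in> {0..T}" for t
      unfolding S_def by (rule per_t[OF phi pos inH AF that])
    have convI: "conv H F p t = integral {0..1} (gg (\<lambda>p. H p t) (\<lambda>p. F p t) p)" if "t \<in> {0..T}" for p t
      unfolding conv_def using convloc.conv_eq[OF loc[OF that], of p] by simp
    have absI: "absconv H F p t = integral {0..1} (\<lambda>u. cmod (gg (\<lambda>p. H p t) (\<lambda>p. F p t) p u))" if "t \<in> {0..T}" for p t
      unfolding absconv_def using convloc.absconv_eq[OF loc[OF that], of p] by simp
    have Wabs: "weighted \<nu> (absconv H F) x \<le> B" and Wconv: "weighted \<nu> (conv H F) x \<le> weighted \<nu> (absconv H F) x"
      if x: "x \<in> Kset \<phi> T" for x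
    proof -
      obtain p t where pt: "x = (p, t)" "p \<in> closure S" "t \<in> {0..T}" using x KS by auto
      have a0: "0 \<le> absconv H F p t"
        unfolding absI[OF pt(3)] by (rule convloc.absI_nonneg[OF loc[OF pt(3)] pt(2)])
      have "(1 + (cmod p)\<^sup>2) * exp (- \<nu> * cmod p) * absconv H F p t \<le> B"
        unfolding absI[OF pt(3)] B_def
        by (rule convloc.weighted_bound[OF loc[OF pt(3)] pt(2) mu SFq[OF pt(3)] SF0])
      thus "weighted \<nu> (absconv H F) x \<le> B" using a0 by (simp add: weighted_def pt(1))
      have "cmod (conv H F p t) \<le> absconv H F p t"
        unfolding absI[OF pt(3)] convI[OF pt(3)] by (rule convloc.I_norm_le[OF loc[OF pt(3)] pt(2)])
      hence "(1 + (cmod p)\<^sup>2) * exp (- \<nu> * cmod p) * cmod (conv H F p t) \<le> (1 + (cmod p)\<^sup>2) * exp (- \<nu> * cmod p) * absconv H F p t"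
        by (intro mult_left_mono) (auto simp: add_nonneg_nonneg)
      thus "weighted \<nu> (conv H F) x \<le> weighted \<nu> (absconv H F) x" using a0 by (simp add: weighted_def pt(1))
    qed
    have bddA: "bdd_above (weighted \<nu> (absconv H F) ` Kset \<phi> T)" by (rule bdd_aboveI2[OF Wabs])
    have bddC: "bdd_above (weighted \<nu> (conv H F) ` Kset \<phi> T)"
      by (rule bdd_aboveI2[of _ _ B]) (use Wabs Wconv in \<open>blast intro: order_trans\<close>)
    show "A_phi \<phi> T \<nu> (conv H F)"
      unfolding A_phi_def nu_bounded_def
    proof (intro conjI ballI bddC)
      fix t :: real assume t: "t \<in> {0..T}"
      have eq: "(\<lambda>p. conv H F p t) = (\<lambda>p. integral {0..1} (gg (\<lambda>p. H p t) (\<lambda>p. F p t) p))"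
        using convI[OF t] by (intro ext) simp
      show "(\<lambda>p. conv H F p t) holomorphic_on sector \<phi>"
        unfolding eq using convloc.I_hol[OF loc[OF t]] by (simp add: S_def)
      show "continuous_on (closure (sector \<phi>)) (\<lambda>p. conv H F p t)"
        unfolding eq using convloc.I_cont[OF loc[OF t]] by (simp add: S_def)
    qed
    show "nu_bounded \<phi> T \<nu> (absconv H F)" unfolding nu_bounded_def by (rule bddA)
    show "nu_norm \<phi> T \<nu> (conv H F) \<le> nu_norm \<phi> T \<nu> (absconv H F)"
      unfolding nu_norm_def
      by (intro mult_left_mono M0_nonneg cSUP_mono[OF Kne bddA]) (use Wconv in blast)
    have KG: "K * Gamma \<alpha> = (4 * cA \<alpha> + cE \<alpha>) / \<alpha>" unfolding K_def using G by simp
    have "nu_norm \<phi> T \<nu> (absconv H F) \<le> M0 * B"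
      unfolding nu_norm_def by (intro mult_left_mono M0_nonneg cSUP_least[OF Kne Wabs])
    also have "M0 * B = (K * Gamma \<alpha>) * C * (\<nu> - \<rho>) powr (- \<alpha>) * (M0 * SF)"
      unfolding KG B_def by (simp add: ac_simps)
    also have "\<dots> = K * C * Gamma \<alpha> * (\<nu> - \<rho>) powr (- \<alpha>) * nu_norm \<phi> T \<nu> F"
      unfolding nu_norm_def SF_def by (simp add: ac_simps)
    finally show "nu_norm \<phi> T \<nu> (absconv H F) \<le> K * C * Gamma \<alpha> * (\<nu> - \<rho>) powr (- \<alpha>) * nu_norm \<phi> T \<nu> F" .
  qed
qed


end
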